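(* Let $H$ be a weak Hopf algebra, $\pi\colon H\to A$ a partial representation, $w\in H_s$ and $z\in H_t$. Then for all $h\in H$: (1) $\pi(w)\pi(h)=\pi(wh)$; (2) $\pi(h)\pi(z)=\pi(hz)$; (3) $\pi(z)\pi(h)=\pi(zh)$; (4) $\pi(h)\pi(w)=\pi(hw)$.
   Context: All algebras are associative and unital over a field $\Bbbk$; Sweedler notation $\Delta(h)=h_1\otimes h_2$, $\Delta(1_H)=1_1\otimes1_2$. A weak Hopf algebra is $(H,m,u,\Delta,\varepsilon,S)$ with $H$ an algebra, $(H,\Delta,\varepsilon)$ a coalgebra, and for all $g,h,k$: $\Delta(kh)=\Delta(k)\Delta(h)$; $\varepsilon(kh_1)\varepsilon(h_2g)=\varepsilon(khg)=\varepsilon(kh_2)\varepsilon(h_1g)$; $(1\otimes\Delta(1))(\Delta(1)\otimes1)=\Delta^2(1)=(\Delta(1)\otimes1)(1\otimes\Delta(1))$; $h_1S(h_2)=\varepsilon_t(h)$; $S(h_1)h_2=\varepsilon_s(h)$; $S(h)=S(h_1)h_2S(h_3)$, where $\varepsilon_t(h)=\varepsilon(1_1h)1_2$, $\varepsilon_s(h)=1_1\varepsilon(h1_2)$; $H_t=\varepsilon_t(H)$, $H_s=\varepsilon_s(H)$. A partial representation of $H$ in $A$ is a linear $\pi\colon H\to A$ with, for all $h,k$: (PR1) $\pi(1_H)=1_A$; (PR2) $\pi(h)\pi(k_1)\pi(S(k_2))=\pi(hk_1)\pi(S(k_2))$; (PR3) $\pi(h)\pi(S(k_1))\pi(k_2)=\pi(hS(k_1))\pi(k_2)$;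 (PR4) $\pi(h_1)\pi(S(h_2))\pi(k)=\pi(h_1)\pi(S(h_2)k)$; (PR5) $\pi(S(h_1))\pi(h_2)\pi(k)=\pi(S(h_1))\pi(h_2k)$; (PR6) $\pi(h)=\pi(h_1)\pi(S(h_2))\pi(h_3)$. *)

theory Defs
  imports Complex_Main
begin

text \<open>
  Since HOL has no tensor products, an element of H (x) H is represented by a finite
  list of pairs [(a1,b1),...,(an,bn)] standing for the sum of the ai (x) bi, and
  similarly for H (x) H (x) H with triples.  Two such lists denote the same tensor iff
  they cannot be separated by products of linear functionals (true over a field).
  The comultiplication is a map Delta giving a representing list for each h, so that
  Sweedler sums h1 (x) h2 are sums over the list Delta h.
\<close>

definition k_algebra :: "('k::field \<Rightarrow> 'h::ring_1 \<Rightarrow> 'h) \<Rightarrow> bool" where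
  "k_algebra sc \<longleftrightarrow> Vector_Spaces.vector_space sc \<and>
     (\<forall>c x y. sc c (x * y) = sc c x * y \<and> sc c (x * y) = x * sc c y)"

definition teq2 :: "('k::field \<Rightarrow> 'h::ring_1 \<Rightarrow> 'h) \<Rightarrow> ('h \<times> 'h) list \<Rightarrow> ('h \<times> 'h) list \<Rightarrow> bool" where
  "teq2 sc T U \<longleftrightarrow>
     (\<forall>f g. Vector_Spaces.linear sc (*) f \<and> Vector_Spaces.linear sc (*) g \<longrightarrow>
        (\<Sum>(a,b)\<leftarrow>T. f a * g b) = (\<Sum>(a,b)\<leftarrow>U. f a * g b))"

definition teq3 :: "('k::field \<Rightarrow> 'h::ring_1 \<Rightarrow> 'h) \<Rightarrow> ('h \<times> 'h \<times> 'h) list \<Rightarrow> ('h \<times> 'h \<times> 'h) list \<Rightarrow> bool" where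
  "teq3 sc T U \<longleftrightarrow>
     (\<forall>f g l. Vector_Spaces.linear sc (*) f \<and> Vector_Spaces.linear sc (*) g \<and> Vector_Spaces.linear sc (*) l \<longrightarrow>
        (\<Sum>(a,b,c)\<leftarrow>T. f a * g b * l c) = (\<Sum>(a,b,c)\<leftarrow>U. f a * g b * l c))"

text \<open>(Delta (x) id) Delta h  and  (id (x) Delta) Delta h, i.e. h1 (x) h2 (x) h3.\<close>
definition cop2L :: "('h \<Rightarrow> ('h \<times> 'h) list) \<Rightarrow> 'h \<Rightarrow> ('h \<times> 'h \<times> 'h) list" where
  "cop2L D h = concat (map (\<lambda>(a,b). map (\<lambda>(x,y). (x,y,b)) (D a)) (D h))"

definition cop2R :: "('h \<Rightarrow> ('h \<times> 'h) list) \<Rightarrow> 'h \<Rightarrow> ('h \<times> 'h \<times> 'h) list" where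
  "cop2R D h = concat (map (\<lambda>(a,b). map (\<lambda>(x,y). (a,x,y)) (D b)) (D h))"

definition tmul2 :: "('h::ring_1 \<times> 'h) list \<Rightarrow> ('h \<times> 'h) list \<Rightarrow> ('h \<times> 'h) list" where
  "tmul2 T U = concat (map (\<lambda>(a,b). map (\<lambda>(c,d). (a * c, b * d)) U) T)"

definition tmul3 :: "('h::ring_1 \<times> 'h \<times> 'h) list \<Rightarrow> ('h \<times> 'h \<times> 'h) list \<Rightarrow> ('h \<times> 'h \<times> 'h) list" where
  "tmul3 T U = concat (map (\<lambda>(a,b,c). map (\<lambda>(x,y,z). (a * x, b * y, c * z)) U) T)"

definition eps_t :: "('k::field \<Rightarrow> 'h::ring_1 \<Rightarrow> 'h) \<Rightarrow> ('h \<Rightarrow> ('h \<times> 'h) list) \<Rightarrow> ('h \<Rightarrow> 'k) \<Rightarrow> 'h \<Rightarrow> 'h" where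
  "eps_t sc D eps h = (\<Sum>(a,b)\<leftarrow>D 1. sc (eps (a * h)) b)"

definition eps_s :: "('k::field \<Rightarrow> 'h::ring_1 \<Rightarrow> 'h) \<Rightarrow> ('h \<Rightarrow> ('h \<times> 'h) list) \<Rightarrow> ('h \<Rightarrow> 'k) \<Rightarrow> 'h \<Rightarrow> 'h" where
  "eps_s sc D eps h = (\<Sum>(a,b)\<leftarrow>D 1. sc (eps (h * b)) a)"

definition weak_hopf_algebra ::
  "('k::field \<Rightarrow> 'h::ring_1 \<Rightarrow> 'h) \<Rightarrow> ('h \<Rightarrow> ('h \<times> 'h) list) \<Rightarrow> ('h \<Rightarrow> 'k) \<Rightarrow> ('h \<Rightarrow> 'h) \<Rightarrow> bool" where
  "weak_hopf_algebra sc D eps S \<longleftrightarrow>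
     k_algebra sc
   \<comment> \<open>coalgebra: Delta and epsilon linear, coassociative, counital\<close>
   \<and> (\<forall>x y. teq2 sc (D (x + y)) (D x @ D y))
   \<and> (\<forall>c x. teq2 sc (D (sc c x)) (map (\<lambda>(a,b). (sc c a, b)) (D x)))
   \<and> Vector_Spaces.linear sc (*) eps
   \<and> (\<forall>h. teq3 sc (cop2L D h) (cop2R D h))
   \<and> (\<forall>h. (\<Sum>(a,b)\<leftarrow>D h. sc (eps a) b) = h)
   \<and> (\<forall>h. (\<Sum>(a,b)\<leftarrow>D h. sc (eps b) a) = h)
   \<comment> \<open>Delta multiplicative\<close>
   \<and> (\<forall>k h. teq2 sc (D (k * h)) (tmul2 (D k) (D h)))
   \<comment> \<open>weak multiplicativity of the counit\<close>
   \<and> (\<forall>k h g. (\<Sum>(a,b)\<leftarrow>D h. eps (k * a) * eps (b * g)) = eps (k * h * g))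
   \<and> (\<forall>k h g. (\<Sum>(a,b)\<leftarrow>D h. eps (k * b) * eps (a * g)) = eps (k * h * g))
   \<comment> \<open>weak comultiplicativity of the unit\<close>
   \<and> teq3 sc (tmul3 (map (\<lambda>(x,y). (1,x,y)) (D 1)) (map (\<lambda>(x,y). (x,y,1)) (D 1))) (cop2L D 1)
   \<and> teq3 sc (cop2L D 1) (tmul3 (map (\<lambda>(x,y). (x,y,1)) (D 1)) (map (\<lambda>(x,y). (1,x,y)) (D 1)))
   \<comment> \<open>antipode\<close>
   \<and> Vector_Spaces.linear sc sc S
   \<and> (\<forall>h. (\<Sum>(a,b)\<leftarrow>D h. a * S b) = eps_t sc D eps h)
   \<and> (\<forall>h. (\<Sum>(a,b)\<leftarrow>D h. S a * b) = eps_s sc D eps h)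
   \<and> (\<forall>h. S h = (\<Sum>(a,b,c)\<leftarrow>cop2L D h. S a * b * S c))"

definition partial_rep ::
  "('k::field \<Rightarrow> 'h::ring_1 \<Rightarrow> 'h) \<Rightarrow> ('h \<Rightarrow> ('h \<times> 'h) list) \<Rightarrow> ('h \<Rightarrow> 'h)
   \<Rightarrow> ('k \<Rightarrow> 'a::ring_1 \<Rightarrow> 'a) \<Rightarrow> ('h \<Rightarrow> 'a) \<Rightarrow> bool" where
  "partial_rep sc D S scA \<pi> \<longleftrightarrow>
     Vector_Spaces.linear sc scA \<pi>
   \<and> \<pi> 1 = 1
   \<and> (\<forall>h k. \<pi> h * (\<Sum>(a,b)\<leftarrow>D k. \<pi> a * \<pi> (S b)) = (\<Sum>(a,b)\<leftarrow>D k. \<pi> (h * a) * \<pi> (S b)))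
   \<and> (\<forall>h k. \<pi> h * (\<Sum>(a,b)\<leftarrow>D k. \<pi> (S a) * \<pi> b) = (\<Sum>(a,b)\<leftarrow>D k. \<pi> (h * S a) * \<pi> b))
   \<and> (\<forall>h k. (\<Sum>(a,b)\<leftarrow>D h. \<pi> a * \<pi> (S b)) * \<pi> k = (\<Sum>(a,b)\<leftarrow>D h. \<pi> a * \<pi> (S b * k)))
   \<and> (\<forall>h k. (\<Sum>(a,b)\<leftarrow>D h. \<pi> (S a) * \<pi> b) * \<pi> k = (\<Sum>(a,b)\<leftarrow>D h. \<pi> (S a) * \<pi> (b * k)))
   \<and> (\<forall>h. \<pi> h = (\<Sum>(a,b,c)\<leftarrow>cop2L D h. \<pi> a * \<pi> (S b) * \<pi> c))"

end

theory Submission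
  imports Defs
begin


lemma vs_self: "Vector_Spaces.vector_space ((*) :: 'k::field \<Rightarrow> 'k \<Rightarrow> 'k)"
  by unfold_locales (auto simp: algebra_simps)

lemma lin_sum: "Vector_Spaces.linear s1 s2 f \<Longrightarrow> f (sum g A) = (\<Sum>x\<in>A. f (g x))"
  unfolding module_hom_iff_linear[symmetric] by (rule module_hom.sum)

lemma lin_scale: "Vector_Spaces.linear s1 s2 f \<Longrightarrow> f (s1 c x) = s2 c (f x)"
  unfolding Vector_Spaces.linear_iff by auto

lemma lin_add: "Vector_Spaces.linear s1 s2 f \<Longrightarrow> f (x + y) = f x + f y"
  unfolding Vector_Spaces.linear_iff by auto

lemma sl_swap: "(\<Sum>(a,b)\<leftarrow>T. \<Sum>e\<in>B. g a b e) = (\<Sum>e\<in>B. \<Sum>(a,b)\<leftarrow>T. g a b e)"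
  by (induction T) (auto simp: sum.distrib)

lemma sl_swap3: "(\<Sum>(a,b,c)\<leftarrow>T. \<Sum>e\<in>B. g a b c e) = (\<Sum>e\<in>B. \<Sum>(a,b,c)\<leftarrow>T. g a b c e)"
  by (induction T) (auto simp: sum.distrib)

lemma sl_scale:
  assumes "Vector_Spaces.vector_space s"
  shows "(\<Sum>(a,b)\<leftarrow>T. s (f a b) v) = s (\<Sum>(a,b)\<leftarrow>T. f a b) v"
proof -
  interpret W: vector_space s by fact
  show ?thesis by (induction T) (auto simp: W.scale_left_distrib)
qed

lemma sl_scale3:
  assumes "Vector_Spaces.vector_space s"
  shows "(\<Sum>(a,b,c)\<leftarrow>T. s (f a b c) v) = s (\<Sum>(a,b,c)\<leftarrow>T. f a b c) v"
proof -
  interpret W: vector_space s by fact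
  show ?thesis by (induction T) (auto simp: W.scale_left_distrib)
qed

lemma coord_basis:
  fixes sc :: "'k::field \<Rightarrow> 'h::ab_group_add \<Rightarrow> 'h"
  assumes vs: "Vector_Spaces.vector_space sc" and X: "finite X"
  obtains B c where "finite B" "\<And>e. Vector_Spaces.linear sc (*) (c e)"
    "\<And>x. x \<in> X \<Longrightarrow> x = (\<Sum>e\<in>B. sc (c e x) e)"
proof -
  interpret V: vector_space sc by fact
  interpret P: vector_space_pair sc "(*) :: 'k \<Rightarrow> 'k \<Rightarrow> 'k"
    using vs vs_self by (auto simp: vector_space_pair_def)
  interpret P2: vector_space_pair sc sc
    using vs by (auto simp: vector_space_pair_def)
  obtain B where B: "B \<subseteq> X" "V.independent B" "X \<subseteq> V.span B"
    using V.maximal_independent_subset by blast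
  have fB: "finite B" using B X finite_subset by blast
  define c where "c e = P.construct B (\<lambda>b. if b = e then 1 else (0::'k))" for e
  have lin: "Vector_Spaces.linear sc (*) (c e)" for e
    unfolding c_def by (rule P.linear_construct) (rule B(2))
  have cb: "b \<in> B \<Longrightarrow> c e b = (if b = e then 1 else 0)" for b e
    unfolding c_def by (rule P.construct_basis) (auto simp: B)
  have lin2: "Vector_Spaces.linear sc sc (\<lambda>x. \<Sum>e\<in>B. sc (c e x) e)"
    unfolding Vector_Spaces.linear_iff
    using vs lin vs_self
    by (auto simp: lin_add[OF lin] lin_scale[OF lin] V.scale_left_distrib sum.distrib V.scale_sum_right)
  have linid: "Vector_Spaces.linear sc sc (\<lambda>x. x)"
    unfolding Vector_Spaces.linear_iff using vs by auto
  have rep: "x = (\<Sum>e\<in>B. sc (c e x) e)" if "x \<in> X" for x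
  proof -
    have "(\<lambda>x. x) x = (\<lambda>x. \<Sum>e\<in>B. sc (c e x) e) x"
    proof (rule P2.linear_eq_on[OF linid lin2])
      show "x \<in> V.span B" using that B by auto
      fix b assume b: "b \<in> B"
      have "(\<Sum>e\<in>B. sc (c e b) e) = (\<Sum>e\<in>B. if e = b then b else 0)"
        by (rule sum.cong) (auto simp: cb b)
      also have "\<dots> = b" using b fB by simp
      finally show "b = (\<Sum>e\<in>B. sc (c e b) e)" by simp
    qed
    then show ?thesis by simp
  qed
  show ?thesis using that fB lin rep by blast
qed

lemma ext2:
  fixes sc :: "'k::field \<Rightarrow> 'h::ring_1 \<Rightarrow> 'h" and s :: "'k \<Rightarrow> 'v::ab_group_add \<Rightarrow> 'v"
  assumes vs: "Vector_Spaces.vector_space sc" and ws: "Vector_Spaces.vector_space s"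
    and teq: "teq2 sc T U"
    and K1: "\<And>y. Vector_Spaces.linear sc s (\<lambda>x. K x y)"
    and K2: "\<And>x. Vector_Spaces.linear sc s (K x)"
  shows "(\<Sum>(a,b)\<leftarrow>T. K a b) = (\<Sum>(a,b)\<leftarrow>U. K a b)"
proof -
  interpret W: vector_space s by fact
  define X where "X = fst ` set T \<union> snd ` set T \<union> fst ` set U \<union> snd ` set U"
  have fX: "finite X" unfolding X_def by auto
  obtain B c where fB: "finite B" and lin: "\<And>e. Vector_Spaces.linear sc (*) (c e)"
    and rep: "\<And>x. x \<in> X \<Longrightarrow> x = (\<Sum>e\<in>B. sc (c e x) e)"
    using coord_basis[OF vs fX] by blast
  have Kexp: "K x y = (\<Sum>e\<in>B. \<Sum>e'\<in>B. s (c e x * c e' y) (K e e'))"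
    if hx: "x \<in> X" and hy: "y \<in> X" for x y
  proof -
    have "K x y = K (\<Sum>e\<in>B. sc (c e x) e) (\<Sum>e'\<in>B. sc (c e' y) e')"
      using rep[OF hx] rep[OF hy] by (rule arg_cong2)
    also have "\<dots> = (\<Sum>e\<in>B. s (c e x) (K e (\<Sum>e'\<in>B. sc (c e' y) e')))"
      by (simp add: lin_sum[OF K1] lin_scale[OF K1])
    also have "\<dots> = (\<Sum>e\<in>B. \<Sum>e'\<in>B. s (c e x * c e' y) (K e e'))"
      by (simp add: lin_sum[OF K2] lin_scale[OF K2] W.scale_sum_right)
    finally show ?thesis .
  qed
  have main: "(\<Sum>(a,b)\<leftarrow>L. K a b) = (\<Sum>e\<in>B. \<Sum>e'\<in>B. s (\<Sum>(a,b)\<leftarrow>L. c e a * c e' b) (K e e'))"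
    if L: "set L \<subseteq> set T \<union> set U" for L
  proof -
    have "(\<Sum>(a,b)\<leftarrow>L. K a b) = (\<Sum>(a,b)\<leftarrow>L. \<Sum>e\<in>B. \<Sum>e'\<in>B. s (c e a * c e' b) (K e e'))"
    proof (rule arg_cong[where f=sum_list], rule map_cong[OF refl])
      fix p assume "p \<in> set L"
      then have "fst p \<in> X" "snd p \<in> X" using L unfolding X_def by force+
      then show "(\<lambda>(a,b). K a b) p = (\<lambda>(a,b). \<Sum>e\<in>B. \<Sum>e'\<in>B. s (c e a * c e' b) (K e e')) p"
        using Kexp by (cases p) auto
    qed
    also have "\<dots> = (\<Sum>e\<in>B. \<Sum>e'\<in>B. s (\<Sum>(a,b)\<leftarrow>L. c e a * c e' b) (K e e'))"
      by (simp add: sl_swap sl_scale[OF ws])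
    finally show ?thesis .
  qed
  have "(\<Sum>(a,b)\<leftarrow>T. c e a * c e' b) = (\<Sum>(a,b)\<leftarrow>U. c e a * c e' b)" for e e'
    using teq lin unfolding teq2_def by blast
  then show ?thesis using main[of T] main[of U] by simp
qed

lemma ext3:
  fixes sc :: "'k::field \<Rightarrow> 'h::ring_1 \<Rightarrow> 'h" and s :: "'k \<Rightarrow> 'v::ab_group_add \<Rightarrow> 'v"
  assumes vs: "Vector_Spaces.vector_space sc" and ws: "Vector_Spaces.vector_space s"
    and teq: "teq3 sc T U"
    and K1: "\<And>y z. Vector_Spaces.linear sc s (\<lambda>x. K x y z)"
    and K2: "\<And>x z. Vector_Spaces.linear sc s (\<lambda>y. K x y z)"
    and K3: "\<And>x y. Vector_Spaces.linear sc s (K x y)"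
  shows "(\<Sum>(a,b,d)\<leftarrow>T. K a b d) = (\<Sum>(a,b,d)\<leftarrow>U. K a b d)"
proof -
  interpret W: vector_space s by fact
  define X where "X = fst ` set T \<union> fst ` snd ` set T \<union> snd ` snd ` set T \<union> fst ` set U \<union> fst ` snd ` set U \<union> snd ` snd ` set U"
  have fX: "finite X" unfolding X_def by auto
  obtain B c where fB: "finite B" and lin: "\<And>e. Vector_Spaces.linear sc (*) (c e)"
    and rep: "\<And>x. x \<in> X \<Longrightarrow> x = (\<Sum>e\<in>B. sc (c e x) e)"
    using coord_basis[OF vs fX] by blast
  have Kexp: "K x y z = (\<Sum>e\<in>B. \<Sum>e'\<in>B. \<Sum>e''\<in>B. s (c e x * c e' y * c e'' z) (K e e' e''))"
    if hx: "x \<in> X" and hy: "y \<in> X" and hz: "z \<in> X" for x y z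
  proof -
    have "K x y z = K (\<Sum>e\<in>B. sc (c e x) e) (\<Sum>e'\<in>B. sc (c e' y) e') (\<Sum>e''\<in>B. sc (c e'' z) e'')"
      using rep[OF hx] rep[OF hy] rep[OF hz] by (metis)
    also have "\<dots> = (\<Sum>e\<in>B. s (c e x) (K e (\<Sum>e'\<in>B. sc (c e' y) e') (\<Sum>e''\<in>B. sc (c e'' z) e'')))"
      by (simp add: lin_sum[OF K1] lin_scale[OF K1])
    also have "\<dots> = (\<Sum>e\<in>B. \<Sum>e'\<in>B. s (c e x * c e' y) (K e e' (\<Sum>e''\<in>B. sc (c e'' z) e'')))"
      by (simp add: lin_sum[OF K2] lin_scale[OF K2] W.scale_sum_right)
    also have "\<dots> = (\<Sum>e\<in>B. \<Sum>e'\<in>B. \<Sum>e''\<in>B. s (c e x * c e' y * c e'' z) (K e e' e''))"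
      by (simp add: lin_sum[OF K3] lin_scale[OF K3] W.scale_sum_right)
    finally show ?thesis .
  qed
  have main: "(\<Sum>(a,b,d)\<leftarrow>L. K a b d) = (\<Sum>e\<in>B. \<Sum>e'\<in>B. \<Sum>e''\<in>B. s (\<Sum>(a,b,d)\<leftarrow>L. c e a * c e' b * c e'' d) (K e e' e''))"
    if L: "set L \<subseteq> set T \<union> set U" for L
  proof -
    have "(\<Sum>(a,b,d)\<leftarrow>L. K a b d) = (\<Sum>(a,b,d)\<leftarrow>L. \<Sum>e\<in>B. \<Sum>e'\<in>B. \<Sum>e''\<in>B. s (c e a * c e' b * c e'' d) (K e e' e''))"
    proof (rule arg_cong[where f=sum_list], rule map_cong[OF refl])
      fix p assume "p \<in> set L"
      then have "fst p \<in> X" "fst (snd p) \<in> X" "snd (snd p) \<in> X" using L unfolding X_def by force+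
      then show "(\<lambda>(a,b,d). K a b d) p = (\<lambda>(a,b,d). \<Sum>e\<in>B. \<Sum>e'\<in>B. \<Sum>e''\<in>B. s (c e a * c e' b * c e'' d) (K e e' e'')) p"
        using Kexp by (cases p) auto
    qed
    also have "\<dots> = (\<Sum>e\<in>B. \<Sum>e'\<in>B. \<Sum>e''\<in>B. s (\<Sum>(a,b,d)\<leftarrow>L. c e a * c e' b * c e'' d) (K e e' e''))"
      by (simp add: sl_swap3 sl_scale3[OF ws])
    finally show ?thesis .
  qed
  have "(\<Sum>(a,b,d)\<leftarrow>T. c e a * c e' b * c e'' d) = (\<Sum>(a,b,d)\<leftarrow>U. c e a * c e' b * c e'' d)" for e e' e''
    using teq lin unfolding teq3_def by blast
  then show ?thesis using main[of T] main[of U] by simp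
qed

lemma linI:
  assumes "Vector_Spaces.vector_space s1" "Vector_Spaces.vector_space s2"
    "\<And>x y. f (x + y) = f x + f y" "\<And>c x. f (s1 c x) = s2 c (f x)"
  shows "Vector_Spaces.linear s1 s2 f"
  using assms unfolding Vector_Spaces.linear_iff by auto

lemma lin_zero: "Vector_Spaces.linear s1 s2 f \<Longrightarrow> f 0 = 0"
  unfolding module_hom_iff_linear[symmetric] by (rule module_hom.zero)

lemma lin_sl: "Vector_Spaces.linear s1 s2 f \<Longrightarrow> f (\<Sum>(a,b)\<leftarrow>L. g a b) = (\<Sum>(a,b)\<leftarrow>L. f (g a b))"
  by (induction L) (auto simp: lin_add lin_zero)

lemma lin_sl3: "Vector_Spaces.linear s1 s2 f \<Longrightarrow> f (\<Sum>(a,b,c)\<leftarrow>L. g a b c) = (\<Sum>(a,b,c)\<leftarrow>L. f (g a b c))"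
  by (induction L) (auto simp: lin_add lin_zero)

lemma sl_comm: "(\<Sum>x\<leftarrow>L1. \<Sum>y\<leftarrow>L2. (f x y :: 'c::comm_monoid_add)) = (\<Sum>y\<leftarrow>L2. \<Sum>x\<leftarrow>L1. f x y)"
proof (induction L1)
  case (Cons a L1)
  have "(\<Sum>y\<leftarrow>L2. f a y + (\<Sum>x\<leftarrow>L1. f x y)) = (\<Sum>y\<leftarrow>L2. f a y) + (\<Sum>y\<leftarrow>L2. \<Sum>x\<leftarrow>L1. f x y)"
    by (rule sum_list_addf)
  then show ?case using Cons by simp
qed simp

lemma sl_multl: "(\<Sum>(a,b)\<leftarrow>L. (c::'a::ring_1) * f a b) = c * (\<Sum>(a,b)\<leftarrow>L. f a b)"
  by (induction L) (auto simp: distrib_left)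

lemma sl_multr: "(\<Sum>(a,b)\<leftarrow>L. f a b * (c::'a::ring_1)) = (\<Sum>(a,b)\<leftarrow>L. f a b) * c"
  by (induction L) (auto simp: distrib_right)

lemma cop2L_sum: "(\<Sum>(a,b,c)\<leftarrow>cop2L D h. F a b c) = (\<Sum>(u,c)\<leftarrow>D h. \<Sum>(a,b)\<leftarrow>D u. F a b c)"
proof -
  have "(\<Sum>(a,b,c)\<leftarrow>concat (map (\<lambda>(a,b). map (\<lambda>(x,y). (x,y,b)) (D a)) L). F a b c) = (\<Sum>(u,c)\<leftarrow>L. \<Sum>(a,b)\<leftarrow>D u. F a b c)" for L
    by (induction L) (auto simp: o_def case_prod_beta)
  then show ?thesis unfolding cop2L_def .
qed

lemma cop2R_sum: "(\<Sum>(a,b,c)\<leftarrow>cop2R D h. F a b c) = (\<Sum>(a,u)\<leftarrow>D h. \<Sum>(b,c)\<leftarrow>D u. F a b c)"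
proof -
  have "(\<Sum>(a,b,c)\<leftarrow>concat (map (\<lambda>(a,b). map (\<lambda>(x,y). (a,x,y)) (D b)) L). F a b c) = (\<Sum>(a,u)\<leftarrow>L. \<Sum>(b,c)\<leftarrow>D u. F a b c)" for L
    by (induction L) (auto simp: o_def case_prod_beta)
  then show ?thesis unfolding cop2R_def .
qed

lemma tmul2_sum: "(\<Sum>(a,b)\<leftarrow>tmul2 T U. K a b) = (\<Sum>(a,b)\<leftarrow>T. \<Sum>(c,d)\<leftarrow>U. K (a*c) (b*d))"
  unfolding tmul2_def by (induction T) (auto simp: o_def case_prod_beta)

lemma tmul3_sum: "(\<Sum>(a,b,c)\<leftarrow>tmul3 T U. K a b c) = (\<Sum>(a,b,c)\<leftarrow>T. \<Sum>(x,y,z)\<leftarrow>U. K (a*x) (b*y) (c*z))"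
  unfolding tmul3_def by (induction T) (auto simp: o_def case_prod_beta)




lemma sl_scr:
  assumes "Vector_Spaces.vector_space s"
  shows "(\<Sum>(a,b)\<leftarrow>L. s c (g a b)) = s c (\<Sum>(a,b)\<leftarrow>L. g a b)"
proof -
  interpret W: vector_space s by fact
  show ?thesis by (induction L) (auto simp: W.scale_right_distrib)
qed

lemma sl_map1: "(\<Sum>(a,b)\<leftarrow>map (\<lambda>(a,b). (f a, b)) L. K a b) = (\<Sum>(a,b)\<leftarrow>L. K (f a) b)"
  by (induction L) auto

lemma tm3a: "(\<Sum>(a,b,c)\<leftarrow>tmul3 (map (\<lambda>(x,y). (1,x,y)) L1) (map (\<lambda>(x,y). (x,y,1)) L2). F a b c)
   = (\<Sum>(x,y)\<leftarrow>L1. \<Sum>(x',y')\<leftarrow>L2. F x' (x*y') y)"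
proof -
  have i: "(\<Sum>(a,b,c)\<leftarrow>map (\<lambda>(x',y',z'). (x', x*y', y*z')) (map (\<lambda>(x,y). (x,y,1)) L2). F a b c)
     = (\<Sum>(x',y')\<leftarrow>L2. F x' (x*y') y)"  for x y
    by (induction L2) auto
  show ?thesis unfolding tmul3_def
    by (induction L1) (auto simp: i simp del: map_map)
qed

lemma tm3b: "(\<Sum>(a,b,c)\<leftarrow>tmul3 (map (\<lambda>(x,y). (x,y,1)) L1) (map (\<lambda>(x,y). (1,x,y)) L2). F a b c)
   = (\<Sum>(x,y)\<leftarrow>L1. \<Sum>(x',y')\<leftarrow>L2. F x (y*x') y')"
proof -
  have i: "(\<Sum>(a,b,c)\<leftarrow>map (\<lambda>(x',y',z'). (x*x', y*y', z')) (map (Pair 1) L2). F a b c)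
     = (\<Sum>(x',y')\<leftarrow>L2. F x (y*x') y')"  for x y
    by (induction L2) auto
  show ?thesis unfolding tmul3_def
    by (induction L1) (auto simp: i simp del: map_map)
qed

lemma tm2: "(\<Sum>(a,b)\<leftarrow>tmul2 L1 L2. K a b) = (\<Sum>(x,y)\<leftarrow>L1. \<Sum>(x',y')\<leftarrow>L2. K (x*x') (y*y'))"
proof -
  have i: "(\<Sum>(a,b)\<leftarrow>map (\<lambda>(x',y'). (x*x', y*y')) L2. K a b)
     = (\<Sum>(x',y')\<leftarrow>L2. K (x*x') (y*y'))"  for x y
    by (induction L2) auto
  show ?thesis unfolding tmul2_def
    by (induction L1) (auto simp: i simp del: map_map)
qed

lemma l1add: "(\<And>y. Vector_Spaces.linear s1 s2 (\<lambda>x. K x y)) \<Longrightarrow> K (a+b) y = K a y + K b y"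
  using lin_add[of s1 s2 "\<lambda>x. K x y"] by auto
lemma l1sc: "(\<And>y. Vector_Spaces.linear s1 s2 (\<lambda>x. K x y)) \<Longrightarrow> K (s1 c a) y = s2 c (K a y)"
  using lin_scale[of s1 s2 "\<lambda>x. K x y"] by auto
lemma l1sl: "(\<And>y. Vector_Spaces.linear s1 s2 (\<lambda>x. K x y)) \<Longrightarrow> K (\<Sum>(a,b)\<leftarrow>L. g a b) y = (\<Sum>(a,b)\<leftarrow>L. K (g a b) y)"
  using lin_sl[of s1 s2 "\<lambda>x. K x y"] by auto
lemma l2add: "(\<And>x. Vector_Spaces.linear s1 s2 (K x)) \<Longrightarrow> K y (a+b) = K y a + K y b"
  using lin_add[of s1 s2 "K y"] by auto
lemma l2sc: "(\<And>x. Vector_Spaces.linear s1 s2 (K x)) \<Longrightarrow> K y (s1 c a) = s2 c (K y a)"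
  using lin_scale[of s1 s2 "K y"] by auto
lemma l2sl: "(\<And>x. Vector_Spaces.linear s1 s2 (K x)) \<Longrightarrow> K y (\<Sum>(a,b)\<leftarrow>L. g a b) = (\<Sum>(a,b)\<leftarrow>L. K y (g a b))"
  using lin_sl[of s1 s2 "K y"] by auto

lemma sl_comm2: "(\<Sum>(p,q)\<leftarrow>L1. \<Sum>(a,b)\<leftarrow>L2. (g p q a b :: 'c::comm_monoid_add)) = (\<Sum>(a,b)\<leftarrow>L2. \<Sum>(p,q)\<leftarrow>L1. g p q a b)"
proof (induction L1)
  case (Cons x L1)
  obtain p q where x: "x = (p,q)" by (cases x)
  have "(\<Sum>(a,b)\<leftarrow>L2. g p q a b + (\<Sum>(p,q)\<leftarrow>L1. g p q a b)) = (\<Sum>(a,b)\<leftarrow>L2. g p q a b) + (\<Sum>(a,b)\<leftarrow>L2. \<Sum>(p,q)\<leftarrow>L1. g p q a b)"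
    by (induction L2) (auto simp: algebra_simps)
  then show ?case using Cons by (simp add: x)
qed simp

lemma sl_cong: "(\<And>a b. (a,b) \<in> set L \<Longrightarrow> f a b = g a b) \<Longrightarrow> (\<Sum>(a,b)\<leftarrow>L. f a b) = (\<Sum>(a,b)\<leftarrow>L. g a b)"
  by (induction L) auto

lemma f1add: "(\<And>y z. Vector_Spaces.linear s1 s2 (\<lambda>x. F x y z)) \<Longrightarrow> F (a+b) y z = F a y z + F b y z"
  using lin_add[of s1 s2 "\<lambda>x. F x y z"] by auto
lemma f1sc: "(\<And>y z. Vector_Spaces.linear s1 s2 (\<lambda>x. F x y z)) \<Longrightarrow> F (s1 c a) y z = s2 c (F a y z)"
  using lin_scale[of s1 s2 "\<lambda>x. F x y z"] by auto
lemma f2add: "(\<And>x z. Vector_Spaces.linear s1 s2 (\<lambda>y. F x y z)) \<Longrightarrow> F x (a+b) z = F x a z + F x b z"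
  using lin_add[of s1 s2 "\<lambda>y. F x y z"] by auto
lemma f2sc: "(\<And>x z. Vector_Spaces.linear s1 s2 (\<lambda>y. F x y z)) \<Longrightarrow> F x (s1 c a) z = s2 c (F x a z)"
  using lin_scale[of s1 s2 "\<lambda>y. F x y z"] by auto
lemma f3add: "(\<And>x y. Vector_Spaces.linear s1 s2 (F x y)) \<Longrightarrow> F x y (a+b) = F x y a + F x y b"
  using lin_add[of s1 s2 "F x y"] by auto
lemma f3sc: "(\<And>x y. Vector_Spaces.linear s1 s2 (F x y)) \<Longrightarrow> F x y (s1 c a) = s2 c (F x y a)"
  using lin_scale[of s1 s2 "F x y"] by auto

lemma sl_add: "(\<Sum>(a,b)\<leftarrow>L. (f a b + g a b :: 'c::comm_monoid_add)) = (\<Sum>(a,b)\<leftarrow>L. f a b) + (\<Sum>(a,b)\<leftarrow>L. g a b)"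
  by (induction L) (auto simp: algebra_simps)

locale wha =
  fixes sc :: "'k::field \<Rightarrow> 'h::ring_1 \<Rightarrow> 'h" and D :: "'h \<Rightarrow> ('h \<times> 'h) list"
    and eps :: "'h \<Rightarrow> 'k" and S :: "'h \<Rightarrow> 'h"
  assumes W: "weak_hopf_algebra sc D eps S"
begin

lemma vs: "Vector_Spaces.vector_space sc"
  using W unfolding weak_hopf_algebra_def k_algebra_def by blast

lemma scm1[simp]: "sc c x * y = sc c (x*y)" and scm2[simp]: "x * sc c y = sc c (x*y)"
  using W unfolding weak_hopf_algebra_def k_algebra_def by metis+

lemma Dadd: "teq2 sc (D (x + y)) (D x @ D y)"
  and Dsc: "teq2 sc (D (sc c x)) (map (\<lambda>(a,b). (sc c a, b)) (D x))"
  and epsl: "Vector_Spaces.linear sc (*) eps"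
  and coass: "teq3 sc (cop2L D h) (cop2R D h)"
  and cnt1: "(\<Sum>(a,b)\<leftarrow>D h. sc (eps a) b) = h"
  and cnt2: "(\<Sum>(a,b)\<leftarrow>D h. sc (eps b) a) = h"
  and Dmul: "teq2 sc (D (k * h)) (tmul2 (D k) (D h))"
  and U1: "teq3 sc (tmul3 (map (\<lambda>(x,y). (1,x,y)) (D 1)) (map (\<lambda>(x,y). (x,y,1)) (D 1))) (cop2L D 1)"
  and U2: "teq3 sc (cop2L D 1) (tmul3 (map (\<lambda>(x,y). (x,y,1)) (D 1)) (map (\<lambda>(x,y). (1,x,y)) (D 1)))"
  and Sl: "Vector_Spaces.linear sc sc S"
  and ant_t: "(\<Sum>(a,b)\<leftarrow>D h. a * S b) = eps_t sc D eps h"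
  and ant_s: "(\<Sum>(a,b)\<leftarrow>D h. S a * b) = eps_s sc D eps h"
  and Sax: "S h = (\<Sum>(a,b,c)\<leftarrow>cop2L D h. S a * b * S c)"
  using W unfolding weak_hopf_algebra_def by blast+

lemma eps_add[simp]: "eps (x + y) = eps x + eps y" and eps_sc[simp]: "eps (sc c x) = c * eps x"
  using epsl by (auto simp: lin_add lin_scale)

lemma S_add[simp]: "S (x + y) = S x + S y" and S_sc[simp]: "S (sc c x) = sc c (S x)"
  using Sl by (auto simp: lin_add lin_scale)


lemma linR: "Vector_Spaces.linear sc sc (\<lambda>x. x * g)"
  by (rule linI[OF vs vs]) (auto simp: distrib_right)

lemma linL: "Vector_Spaces.linear sc sc (\<lambda>x. g * x)"
  by (rule linI[OF vs vs]) (auto simp: distrib_left)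

lemma Dlin:
  assumes ws: "Vector_Spaces.vector_space s"
    and K1: "\<And>y. Vector_Spaces.linear sc s (\<lambda>x. K x y)"
    and K2: "\<And>x. Vector_Spaces.linear sc s (K x)"
  shows "Vector_Spaces.linear sc s (\<lambda>x. \<Sum>(a,b)\<leftarrow>D x. K a b)"
proof (rule linI[OF vs ws])
  fix x y
  show "(\<Sum>(a,b)\<leftarrow>D (x + y). K a b) = (\<Sum>(a,b)\<leftarrow>D x. K a b) + (\<Sum>(a,b)\<leftarrow>D y. K a b)"
    using ext2[OF vs ws Dadd K1 K2] by simp
next
  fix c x
  have "(\<Sum>(a,b)\<leftarrow>D (sc c x). K a b) = (\<Sum>(a,b)\<leftarrow>map (\<lambda>(a,b). (sc c a, b)) (D x). K a b)"
    using ext2[OF vs ws Dsc K1 K2] by simp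
  also have "\<dots> = (\<Sum>(a,b)\<leftarrow>D x. s c (K a b))"
  proof (subst sl_map1)
    have "K (sc c a) b = s c (K a b)" for a b using lin_scale[OF K1] by metis
    then show "(\<Sum>(a,b)\<leftarrow>D x. K (sc c a) b) = (\<Sum>(a,b)\<leftarrow>D x. s c (K a b))" by simp
  qed
  also have "\<dots> = s c (\<Sum>(a,b)\<leftarrow>D x. K a b)" by (rule sl_scr[OF ws])
  finally show "(\<Sum>(a,b)\<leftarrow>D (sc c x). K a b) = s c (\<Sum>(a,b)\<leftarrow>D x. K a b)" .
qed


lemma T0:
  assumes ws: "Vector_Spaces.vector_space s"
    and K1: "\<And>y. Vector_Spaces.linear sc s (\<lambda>x. K x y)"
    and K2: "\<And>x. Vector_Spaces.linear sc s (K x)"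
  shows "(\<Sum>(x,y)\<leftarrow>D 1. \<Sum>(x',y')\<leftarrow>D 1. s (eps (x*y')) (K x' y)) = (\<Sum>(p,q)\<leftarrow>D 1. K p q)"
proof -
  interpret Wv: vector_space s by fact
  let ?F = "\<lambda>a b c. s (eps b) (K a c)"
  have "(\<Sum>(x,y)\<leftarrow>D 1. \<Sum>(x',y')\<leftarrow>D 1. s (eps (x*y')) (K x' y))
     = (\<Sum>(a,b,c)\<leftarrow>tmul3 (map (\<lambda>(x,y). (1,x,y)) (D 1)) (map (\<lambda>(x,y). (x,y,1)) (D 1)). ?F a b c)"
    by (rule tm3a[symmetric])
  also have "\<dots> = (\<Sum>(a,b,c)\<leftarrow>cop2L D 1. ?F a b c)"
    by (rule ext3[OF vs ws U1])
      (rule linI[OF vs ws]; simp add: lin_add[OF K1] lin_scale[OF K1] lin_add[OF K2] lin_scale[OF K2] Wv.scale_scale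
         Wv.scale_right_distrib Wv.scale_left_distrib)+
  also have "\<dots> = (\<Sum>(u,c)\<leftarrow>D 1. \<Sum>(a,b)\<leftarrow>D u. ?F a b c)" by (rule cop2L_sum)
  also have "\<dots> = (\<Sum>(u,c)\<leftarrow>D 1. K (\<Sum>(a,b)\<leftarrow>D u. sc (eps b) a) c)"
    by (simp add: lin_sl[OF K1] lin_scale[OF K1])
  also have "\<dots> = (\<Sum>(p,q)\<leftarrow>D 1. K p q)" by (simp add: cnt2)
  finally show ?thesis .
qed



lemma T1:
  assumes ws: "Vector_Spaces.vector_space s"
    and K1: "\<And>y. Vector_Spaces.linear sc s (\<lambda>x. K x y)"
    and K2: "\<And>x. Vector_Spaces.linear sc s (K x)"
  shows "(\<Sum>(p,q)\<leftarrow>D 1. K (eps_s sc D eps p) q) = (\<Sum>(p,q)\<leftarrow>D 1. K p q)"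
proof -
  have "(\<Sum>(p,q)\<leftarrow>D 1. K (eps_s sc D eps p) q) = (\<Sum>(x,y)\<leftarrow>D 1. \<Sum>(x',y')\<leftarrow>D 1. s (eps (x*y')) (K x' y))"
    unfolding eps_s_def by (simp add: l1sl[where K=K, OF K1] l1sc[where K=K, OF K1])
  also have "\<dots> = (\<Sum>(p,q)\<leftarrow>D 1. K p q)" by (rule T0[where K=K, OF ws K1 K2])
  finally show ?thesis .
qed

lemma T2:
  assumes ws: "Vector_Spaces.vector_space s"
    and K1: "\<And>y. Vector_Spaces.linear sc s (\<lambda>x. K x y)"
    and K2: "\<And>x. Vector_Spaces.linear sc s (K x)"
  shows "(\<Sum>(p,q)\<leftarrow>D 1. K p (eps_t sc D eps q)) = (\<Sum>(p,q)\<leftarrow>D 1. K p q)"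
proof -
  have "(\<Sum>(p,q)\<leftarrow>D 1. K p (eps_t sc D eps q)) = (\<Sum>(p,q)\<leftarrow>D 1. \<Sum>(x,y)\<leftarrow>D 1. s (eps (x*q)) (K p y))"
    unfolding eps_t_def by (simp add: l2sl[where K=K, OF K2] l2sc[where K=K, OF K2])
  also have "\<dots> = (\<Sum>(x,y)\<leftarrow>D 1. \<Sum>(p,q)\<leftarrow>D 1. s (eps (x*q)) (K p y))" by (rule sl_comm2)
  also have "\<dots> = (\<Sum>(p,q)\<leftarrow>D 1. K p q)" by (rule T0[where K=K, OF ws K1 K2])
  finally show ?thesis .
qed

lemma eps_s1: "eps_s sc D eps 1 = 1"
  unfolding eps_s_def using cnt2[of 1] by simp

lemma eps_t1: "eps_t sc D eps 1 = 1"
  unfolding eps_t_def using cnt1[of 1] by simp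

lemma Zl:
  assumes ws: "Vector_Spaces.vector_space s"
    and K1: "\<And>y. Vector_Spaces.linear sc s (\<lambda>x. K x y)"
    and K2: "\<And>x. Vector_Spaces.linear sc s (K x)"
  shows "(\<Sum>(a,b)\<leftarrow>D (eps_t sc D eps g). K a b) = (\<Sum>(p,q)\<leftarrow>D 1. K (eps_t sc D eps g * p) q)"
proof -
  interpret Wv: vector_space s by fact
  note DL = Dlin[where K=K, OF ws K1 K2]
  let ?F = "\<lambda>a b c. s (eps (a*g)) (K b c)"
  have "(\<Sum>(a,b)\<leftarrow>D (eps_t sc D eps g). K a b) = (\<Sum>(p,q)\<leftarrow>D 1. s (eps (p*g)) (\<Sum>(b,c)\<leftarrow>D q. K b c))"
    unfolding eps_t_def by (simp add: lin_sl[OF DL] lin_scale[OF DL])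
  also have "\<dots> = (\<Sum>(p,q)\<leftarrow>D 1. \<Sum>(b,c)\<leftarrow>D q. ?F p b c)"
    by (simp add: sl_scr[OF ws])
  also have "\<dots> = (\<Sum>(a,b,c)\<leftarrow>cop2R D 1. ?F a b c)" by (rule cop2R_sum[symmetric])
  also have "\<dots> = (\<Sum>(a,b,c)\<leftarrow>cop2L D 1. ?F a b c)"
    by (rule ext3[OF vs ws coass, symmetric])
      (rule linI[OF vs ws]; simp add: l1add[where K=K, OF K1] l1sc[where K=K, OF K1] l2add[where K=K, OF K2] l2sc[where K=K, OF K2] distrib_right
         Wv.scale_right_distrib Wv.scale_left_distrib)+
  also have "\<dots> = (\<Sum>(a,b,c)\<leftarrow>tmul3 (map (\<lambda>(x,y). (x,y,1)) (D 1)) (map (\<lambda>(x,y). (1,x,y)) (D 1)). ?F a b c)"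
    by (rule ext3[OF vs ws U2])
      (rule linI[OF vs ws]; simp add: l1add[where K=K, OF K1] l1sc[where K=K, OF K1] l2add[where K=K, OF K2] l2sc[where K=K, OF K2] distrib_right
         Wv.scale_right_distrib Wv.scale_left_distrib)+
  also have "\<dots> = (\<Sum>(x,y)\<leftarrow>D 1. \<Sum>(x',y')\<leftarrow>D 1. s (eps (x*g)) (K (y*x') y'))"
    by (rule tm3b)
  also have "\<dots> = (\<Sum>(x',y')\<leftarrow>D 1. \<Sum>(x,y)\<leftarrow>D 1. s (eps (x*g)) (K (y*x') y'))"
    by (rule sl_comm2)
  also have "\<dots> = (\<Sum>(p,q)\<leftarrow>D 1. K (eps_t sc D eps g * p) q)"
    unfolding eps_t_def
    by (simp add: sl_multr[symmetric] l1sl[where K=K, OF K1] l1sc[where K=K, OF K1])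
  finally show ?thesis .
qed

lemma Wr:
  assumes ws: "Vector_Spaces.vector_space s"
    and K1: "\<And>y. Vector_Spaces.linear sc s (\<lambda>x. K x y)"
    and K2: "\<And>x. Vector_Spaces.linear sc s (K x)"
  shows "(\<Sum>(a,b)\<leftarrow>D (eps_s sc D eps g). K a b) = (\<Sum>(p,q)\<leftarrow>D 1. K p (q * eps_s sc D eps g))"
proof -
  interpret Wv: vector_space s by fact
  note DL = Dlin[where K=K, OF ws K1 K2]
  let ?F = "\<lambda>a b c. s (eps (g*c)) (K a b)"
  have "(\<Sum>(a,b)\<leftarrow>D (eps_s sc D eps g). K a b) = (\<Sum>(p,q)\<leftarrow>D 1. s (eps (g*q)) (\<Sum>(a,b)\<leftarrow>D p. K a b))"
    unfolding eps_s_def by (simp add: lin_sl[OF DL] lin_scale[OF DL])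
  also have "\<dots> = (\<Sum>(p,q)\<leftarrow>D 1. \<Sum>(a,b)\<leftarrow>D p. ?F a b q)"
    by (simp add: sl_scr[OF ws])
  also have "\<dots> = (\<Sum>(a,b,c)\<leftarrow>cop2L D 1. ?F a b c)" by (rule cop2L_sum[symmetric])
  also have "\<dots> = (\<Sum>(a,b,c)\<leftarrow>tmul3 (map (\<lambda>(x,y). (x,y,1)) (D 1)) (map (\<lambda>(x,y). (1,x,y)) (D 1)). ?F a b c)"
    by (rule ext3[OF vs ws U2])
      (rule linI[OF vs ws]; simp add: l1add[where K=K, OF K1] l1sc[where K=K, OF K1] l2add[where K=K, OF K2] l2sc[where K=K, OF K2] distrib_left
         Wv.scale_right_distrib Wv.scale_left_distrib)+
  also have "\<dots> = (\<Sum>(x,y)\<leftarrow>D 1. \<Sum>(x',y')\<leftarrow>D 1. s (eps (g*y')) (K x (y*x')))"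
    by (rule tm3b)
  also have "\<dots> = (\<Sum>(p,q)\<leftarrow>D 1. K p (q * eps_s sc D eps g))"
    unfolding eps_s_def
    by (simp add: sl_multl[symmetric] l2sl[where K=K, OF K2] l2sc[where K=K, OF K2])
  finally show ?thesis .
qed


lemma L2z:
  assumes ws: "Vector_Spaces.vector_space s"
    and K1: "\<And>y. Vector_Spaces.linear sc s (\<lambda>x. K x y)"
    and K2: "\<And>x. Vector_Spaces.linear sc s (K x)"
  shows "(\<Sum>(a,b)\<leftarrow>D (eps_t sc D eps g * h). K a b) = (\<Sum>(a,b)\<leftarrow>D h. K (eps_t sc D eps g * a) b)"
proof -
  interpret Wv: vector_space s by fact
  let ?z = "eps_t sc D eps g"
  let ?M = "\<lambda>p q. \<Sum>(a,b)\<leftarrow>D h. K (p*a) (q*b)"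
  have M1: "\<And>y. Vector_Spaces.linear sc s (\<lambda>x. ?M x y)"
    by (rule linI[OF vs ws]) (simp_all add: distrib_right l1add[where K=K, OF K1] l1sc[where K=K, OF K1] sl_add sl_scr[OF ws])
  have M2: "\<And>x. Vector_Spaces.linear sc s (?M x)"
    by (rule linI[OF vs ws]) (simp_all add: distrib_right l2add[where K=K, OF K2] l2sc[where K=K, OF K2] sl_add sl_scr[OF ws])
  have K1': "\<And>y. Vector_Spaces.linear sc s (\<lambda>x. K (?z * x) y)"
    by (rule linI[OF vs ws]) (simp_all add: distrib_left l1add[where K=K, OF K1] l1sc[where K=K, OF K1])
  have "(\<Sum>(a,b)\<leftarrow>D (?z * h). K a b) = (\<Sum>(a,b)\<leftarrow>tmul2 (D ?z) (D h). K a b)"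
    by (rule ext2[where K=K, OF vs ws Dmul K1 K2])
  also have "\<dots> = (\<Sum>(p,q)\<leftarrow>D ?z. ?M p q)" by (rule tm2)
  also have "\<dots> = (\<Sum>(p,q)\<leftarrow>D 1. ?M (?z * p) q)" by (rule Zl[where K="?M", OF ws M1 M2])
  also have "\<dots> = (\<Sum>(a,b)\<leftarrow>tmul2 (D 1) (D h). K (?z * a) b)" by (simp add: tm2 mult.assoc)
  also have "\<dots> = (\<Sum>(a,b)\<leftarrow>D (1 * h). K (?z * a) b)"
    by (rule ext2[where K="\<lambda>a b. K (?z * a) b", OF vs ws Dmul K1' K2, symmetric])
  finally show ?thesis by simp
qed

lemma L2w:
  assumes ws: "Vector_Spaces.vector_space s"
    and K1: "\<And>y. Vector_Spaces.linear sc s (\<lambda>x. K x y)"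
    and K2: "\<And>x. Vector_Spaces.linear sc s (K x)"
  shows "(\<Sum>(a,b)\<leftarrow>D (h * eps_s sc D eps g). K a b) = (\<Sum>(a,b)\<leftarrow>D h. K a (b * eps_s sc D eps g))"
proof -
  interpret Wv: vector_space s by fact
  let ?w = "eps_s sc D eps g"
  have M1: "\<And>y. Vector_Spaces.linear sc s (\<lambda>p. K (a*p) (b*y))" for a b
    by (rule linI[OF vs ws]) (simp_all add: distrib_left l1add[where K=K, OF K1] l1sc[where K=K, OF K1])
  have M2: "\<And>x. Vector_Spaces.linear sc s (\<lambda>q. K (a*x) (b*q))" for a b
    by (rule linI[OF vs ws]) (simp_all add: distrib_left l2add[where K=K, OF K2] l2sc[where K=K, OF K2])
  have K2': "\<And>x. Vector_Spaces.linear sc s (\<lambda>y. K x (y * ?w))"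
    by (rule linI[OF vs ws]) (simp_all add: distrib_right l2add[where K=K, OF K2] l2sc[where K=K, OF K2])
  have "(\<Sum>(a,b)\<leftarrow>D (h * ?w). K a b) = (\<Sum>(a,b)\<leftarrow>tmul2 (D h) (D ?w). K a b)"
    by (rule ext2[where K=K, OF vs ws Dmul K1 K2])
  also have "\<dots> = (\<Sum>(a,b)\<leftarrow>D h. \<Sum>(p,q)\<leftarrow>D ?w. K (a*p) (b*q))" by (rule tm2)
  also have "\<dots> = (\<Sum>(a,b)\<leftarrow>D h. \<Sum>(p,q)\<leftarrow>D 1. K (a*p) (b*(q*?w)))"
    by (rule sl_cong) (rule Wr[where K="\<lambda>p q. K (_*p) (_*q)", OF ws M1 M2])
  also have "\<dots> = (\<Sum>(a,b)\<leftarrow>tmul2 (D h) (D 1). K a (b * ?w))" by (simp add: tm2 mult.assoc)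
  also have "\<dots> = (\<Sum>(a,b)\<leftarrow>D (h * 1). K a (b * ?w))"
    by (rule ext2[where K="\<lambda>a b. K a (b * ?w)", OF vs ws Dmul K1 K2', symmetric])
  finally show ?thesis by simp
qed



lemma vsl: "sc (a + b) x = sc a x + sc b x" using vs unfolding vector_space_def by blast
lemma vss: "sc (a * b) x = sc a (sc b x)" using vs unfolding vector_space_def by metis
lemma vsl': "sc (a + b) = (\<lambda>x. sc a x + sc b x)" using vsl by blast
lemma vss': "sc (a * b) = (\<lambda>x. sc a (sc b x))" using vss by blast

lemma eps_s_lin: "Vector_Spaces.linear sc sc (eps_s sc D eps)"
  unfolding eps_s_def
  by (rule linI[OF vs vs]) (simp_all add: distrib_right vsl vss sl_add sl_scr[OF vs])

lemma eps_t_lin: "Vector_Spaces.linear sc sc (eps_t sc D eps)"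
  unfolding eps_t_def
  by (rule linI[OF vs vs]) (simp_all only: distrib_left eps_add eps_sc scm2 vsl' vss' sl_add sl_scr[OF vs])

lemma eps_s_add[simp]: "eps_s sc D eps (x + y) = eps_s sc D eps x + eps_s sc D eps y"
  and eps_s_sc[simp]: "eps_s sc D eps (sc c x) = sc c (eps_s sc D eps x)"
  using eps_s_lin by (auto simp: lin_add lin_scale)

lemma eps_t_add[simp]: "eps_t sc D eps (x + y) = eps_t sc D eps x + eps_t sc D eps y"
  and eps_t_sc[simp]: "eps_t sc D eps (sc c x) = sc c (eps_t sc D eps x)"
  using eps_t_lin by (auto simp: lin_add lin_scale)

lemma S_s: "S (eps_s sc D eps g) = eps_t sc D eps (eps_s sc D eps g)"
proof -
  let ?y = "eps_s sc D eps g"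
  have "S ?y = (\<Sum>(u,c)\<leftarrow>D ?y. \<Sum>(a,b)\<leftarrow>D u. S a * b * S c)" unfolding Sax[of ?y] by (rule cop2L_sum)
  also have "\<dots> = (\<Sum>(u,c)\<leftarrow>D ?y. eps_s sc D eps u * S c)" by (simp add: sl_multr ant_s)
  also have "\<dots> = (\<Sum>(p,q)\<leftarrow>D 1. eps_s sc D eps p * S (q * ?y))"
    by (rule Wr[where K="\<lambda>a b. eps_s sc D eps a * S b", OF vs])
      (rule linI[OF vs vs]; simp add: distrib_left distrib_right)+
  also have "\<dots> = (\<Sum>(p,q)\<leftarrow>D 1. p * S (q * ?y))"
    by (rule T1[where K="\<lambda>a b. a * S (b * ?y)", OF vs])
      (rule linI[OF vs vs]; simp add: distrib_left distrib_right)+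
  also have "\<dots> = (\<Sum>(a,b)\<leftarrow>D ?y. a * S b)"
    by (rule Wr[where K="\<lambda>a b. a * S b", OF vs, symmetric])
      (rule linI[OF vs vs]; simp add: distrib_left distrib_right)+
  also have "\<dots> = eps_t sc D eps ?y" by (rule ant_t)
  finally show ?thesis .
qed

lemma S_t: "S (eps_t sc D eps g) = eps_s sc D eps (eps_t sc D eps g)"
proof -
  let ?z = "eps_t sc D eps g"
  have "S ?z = (\<Sum>(a,b,c)\<leftarrow>cop2R D ?z. S a * b * S c)"
    unfolding Sax[of ?z]
    by (rule ext3[where K="\<lambda>a b c. S a * b * S c", OF vs vs coass])
      (rule linI[OF vs vs]; simp add: distrib_left distrib_right)+
  also have "\<dots> = (\<Sum>(a,u)\<leftarrow>D ?z. S a * (\<Sum>(b,c)\<leftarrow>D u. b * S c))"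
    by (simp add: cop2R_sum sl_multl mult.assoc)
  also have "\<dots> = (\<Sum>(a,u)\<leftarrow>D ?z. S a * eps_t sc D eps u)" by (simp add: ant_t)
  also have "\<dots> = (\<Sum>(p,q)\<leftarrow>D 1. S (?z * p) * eps_t sc D eps q)"
    by (rule Zl[where K="\<lambda>a b. S a * eps_t sc D eps b", OF vs])
      (rule linI[OF vs vs]; simp add: distrib_left distrib_right)+
  also have "\<dots> = (\<Sum>(p,q)\<leftarrow>D 1. S (?z * p) * q)"
    by (rule T2[where K="\<lambda>a b. S (?z * a) * b", OF vs])
      (rule linI[OF vs vs]; simp add: distrib_left distrib_right)+
  also have "\<dots> = (\<Sum>(a,b)\<leftarrow>D ?z. S a * b)"
    by (rule Zl[where K="\<lambda>a b. S a * b", OF vs, symmetric])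
      (rule linI[OF vs vs]; simp add: distrib_left distrib_right)+
  also have "\<dots> = eps_s sc D eps ?z" by (rule ant_s)
  finally show ?thesis .
qed



lemma L3z:
  assumes ws: "Vector_Spaces.vector_space s"
    and F1: "\<And>y z. Vector_Spaces.linear sc s (\<lambda>x. F x y z)"
    and F2: "\<And>x z. Vector_Spaces.linear sc s (\<lambda>y. F x y z)"
    and F3: "\<And>x y. Vector_Spaces.linear sc s (F x y)"
  shows "(\<Sum>(a,b,c)\<leftarrow>cop2L D (eps_t sc D eps g * h). F a b c) = (\<Sum>(a,b,c)\<leftarrow>cop2L D h. F (eps_t sc D eps g * a) b c)"
proof -
  interpret Wv: vector_space s by fact
  let ?z = "eps_t sc D eps g"
  let ?G = "\<lambda>u c. \<Sum>(a,b)\<leftarrow>D u. F a b c"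
  have P1: "\<And>y. Vector_Spaces.linear sc s (\<lambda>x. F x y c)" for c by (rule F1)
  have P2: "\<And>x. Vector_Spaces.linear sc s (\<lambda>y. F x y c)" for c by (rule F2)
  have G1: "\<And>c. Vector_Spaces.linear sc s (\<lambda>u. ?G u c)"
    by (rule Dlin[where K="\<lambda>a b. F a b _", OF ws P1 P2])
  have G2: "\<And>u. Vector_Spaces.linear sc s (?G u)"
    by (rule linI[OF vs ws]) (simp_all add: f3add[where F=F, OF F3] f3sc[where F=F, OF F3] sl_add sl_scr[OF ws])
  have "(\<Sum>(a,b,c)\<leftarrow>cop2L D (?z * h). F a b c) = (\<Sum>(u,c)\<leftarrow>D (?z * h). ?G u c)" by (rule cop2L_sum)
  also have "\<dots> = (\<Sum>(u,c)\<leftarrow>D h. ?G (?z * u) c)" by (rule L2z[where K="?G", OF ws G1 G2])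
  also have "\<dots> = (\<Sum>(u,c)\<leftarrow>D h. \<Sum>(a,b)\<leftarrow>D u. F (?z * a) b c)"
  proof (rule sl_cong)
    fix u c
    show "(\<Sum>(a,b)\<leftarrow>D (?z * u). F a b c) = (\<Sum>(a,b)\<leftarrow>D u. F (?z * a) b c)"
      by (rule L2z[where K="\<lambda>a b. F a b c", OF ws]) (rule F1, rule F2)
  qed
  also have "\<dots> = (\<Sum>(a,b,c)\<leftarrow>cop2L D h. F (?z * a) b c)" by (rule cop2L_sum[symmetric])
  finally show ?thesis .
qed

lemma L3w:
  assumes ws: "Vector_Spaces.vector_space s"
    and F1: "\<And>y z. Vector_Spaces.linear sc s (\<lambda>x. F x y z)"
    and F2: "\<And>x z. Vector_Spaces.linear sc s (\<lambda>y. F x y z)"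
    and F3: "\<And>x y. Vector_Spaces.linear sc s (F x y)"
  shows "(\<Sum>(a,b,c)\<leftarrow>cop2R D (h * eps_s sc D eps g). F a b c) = (\<Sum>(a,b,c)\<leftarrow>cop2R D h. F a b (c * eps_s sc D eps g))"
proof -
  interpret Wv: vector_space s by fact
  let ?w = "eps_s sc D eps g"
  let ?G = "\<lambda>a u. \<Sum>(b,c)\<leftarrow>D u. F a b c"
  have P1: "\<And>y. Vector_Spaces.linear sc s (\<lambda>x. F a x y)" for a by (rule F2)
  have P2: "\<And>x. Vector_Spaces.linear sc s (\<lambda>y. F a x y)" for a by (rule F3)
  have G2: "\<And>a. Vector_Spaces.linear sc s (?G a)"
    by (rule Dlin[where K="\<lambda>b c. F _ b c", OF ws P1 P2])
  have G1: "\<And>u. Vector_Spaces.linear sc s (\<lambda>a. ?G a u)"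
    by (rule linI[OF vs ws]) (simp_all add: f1add[where F=F, OF F1] f1sc[where F=F, OF F1] sl_add sl_scr[OF ws])
  have "(\<Sum>(a,b,c)\<leftarrow>cop2R D (h * ?w). F a b c) = (\<Sum>(a,u)\<leftarrow>D (h * ?w). ?G a u)" by (rule cop2R_sum)
  also have "\<dots> = (\<Sum>(a,u)\<leftarrow>D h. ?G a (u * ?w))" by (rule L2w[where K="?G", OF ws G1 G2])
  also have "\<dots> = (\<Sum>(a,u)\<leftarrow>D h. \<Sum>(b,c)\<leftarrow>D u. F a b (c * ?w))"
  proof (rule sl_cong)
    fix a u
    show "(\<Sum>(b,c)\<leftarrow>D (u * ?w). F a b c) = (\<Sum>(b,c)\<leftarrow>D u. F a b (c * ?w))"
      by (rule L2w[where K="\<lambda>b c. F a b c", OF ws]) (rule F2, rule F3)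
  qed
  also have "\<dots> = (\<Sum>(a,b,c)\<leftarrow>cop2R D h. F a b (c * ?w))" by (rule cop2R_sum[symmetric])
  finally show ?thesis .
qed


end



locale wpr = wha sc D eps S
  for sc :: "'k::field \<Rightarrow> 'h::ring_1 \<Rightarrow> 'h" and D eps S +
  fixes scA :: "'k \<Rightarrow> 'a::ring_1 \<Rightarrow> 'a" and \<pi> :: "'h \<Rightarrow> 'a"
  assumes KA: "k_algebra scA" and PR: "partial_rep sc D S scA \<pi>"
begin

lemma wsA: "Vector_Spaces.vector_space scA"
  using KA unfolding k_algebra_def by blast

lemma sAm1[simp]: "scA c x * y = scA c (x*y)" and sAm2[simp]: "x * scA c y = scA c (x*y)"
  using KA unfolding k_algebra_def by metis+

lemma pil: "Vector_Spaces.linear sc scA \<pi>"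
  and pi1: "\<pi> 1 = 1"
  and PR2: "\<pi> h * (\<Sum>(a,b)\<leftarrow>D k. \<pi> a * \<pi> (S b)) = (\<Sum>(a,b)\<leftarrow>D k. \<pi> (h * a) * \<pi> (S b))"
  and PR5: "(\<Sum>(a,b)\<leftarrow>D h. \<pi> (S a) * \<pi> b) * \<pi> k = (\<Sum>(a,b)\<leftarrow>D h. \<pi> (S a) * \<pi> (b * k))"
  and PR6: "\<pi> h = (\<Sum>(a,b,c)\<leftarrow>cop2L D h. \<pi> a * \<pi> (S b) * \<pi> c)"
  using PR unfolding partial_rep_def by blast+

lemma pi_add[simp]: "\<pi> (x + y) = \<pi> x + \<pi> y" and pi_sc[simp]: "\<pi> (sc c x) = scA c (\<pi> x)"
  using pil by (auto simp: lin_add lin_scale)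

lemma P3: "\<pi> (eps_t sc D eps g) * \<pi> h = \<pi> (eps_t sc D eps g * h)"
proof -
  let ?z = "eps_t sc D eps g"
  let ?F = "\<lambda>a b c. \<pi> a * \<pi> (S b) * \<pi> c"
  have e: "\<pi> x = (\<Sum>(u,c)\<leftarrow>D x. (\<Sum>(a,b)\<leftarrow>D u. \<pi> a * \<pi> (S b)) * \<pi> c)" for x
    by (subst PR6[of x]) (simp add: cop2L_sum sl_multr)
  have "\<pi> ?z * \<pi> h = (\<Sum>(u,c)\<leftarrow>D h. \<pi> ?z * ((\<Sum>(a,b)\<leftarrow>D u. \<pi> a * \<pi> (S b)) * \<pi> c))"
    by (subst e[of h]) (rule sl_multl[symmetric])
  also have "\<dots> = (\<Sum>(u,c)\<leftarrow>D h. (\<pi> ?z * (\<Sum>(a,b)\<leftarrow>D u. \<pi> a * \<pi> (S b))) * \<pi> c)"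
    by (simp only: mult.assoc)
  also have "\<dots> = (\<Sum>(u,c)\<leftarrow>D h. (\<Sum>(a,b)\<leftarrow>D u. \<pi> (?z * a) * \<pi> (S b)) * \<pi> c)"
    by (simp add: PR2)
  also have "\<dots> = (\<Sum>(a,b,c)\<leftarrow>cop2L D h. ?F (?z * a) b c)"
    by (simp add: cop2L_sum sl_multr)
  also have "\<dots> = (\<Sum>(a,b,c)\<leftarrow>cop2L D (?z * h). ?F a b c)"
    by (rule L3z[where F="?F", OF wsA, symmetric])
      (rule linI[OF vs wsA]; simp add: distrib_left distrib_right)+
  also have "\<dots> = \<pi> (?z * h)" by (rule PR6[symmetric])
  finally show ?thesis .
qed


lemma copLR: "(\<Sum>(a,b,c)\<leftarrow>cop2L D x. \<pi> a * \<pi> (S b) * \<pi> c) = (\<Sum>(a,b,c)\<leftarrow>cop2R D x. \<pi> a * \<pi> (S b) * \<pi> c)"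
  by (rule ext3[where K="\<lambda>a b c. \<pi> a * \<pi> (S b) * \<pi> c", OF vs wsA coass]) (rule linI[OF vs wsA]; simp add: distrib_left distrib_right)+

lemma P4: "\<pi> h * \<pi> (eps_s sc D eps g) = \<pi> (h * eps_s sc D eps g)"
proof -
  let ?w = "eps_s sc D eps g"
  let ?F = "\<lambda>a b c. \<pi> a * \<pi> (S b) * \<pi> c"
  have "\<pi> h * \<pi> ?w = (\<Sum>(a,b,c)\<leftarrow>cop2R D h. ?F a b c) * \<pi> ?w"
    using PR6[of h] copLR[of h] by simp
  also have "\<dots> = (\<Sum>(a,u)\<leftarrow>D h. \<pi> a * ((\<Sum>(b,c)\<leftarrow>D u. \<pi> (S b) * \<pi> c) * \<pi> ?w))"
    by (simp add: cop2R_sum sl_multr[symmetric] sl_multl[symmetric] mult.assoc)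
  also have "\<dots> = (\<Sum>(a,u)\<leftarrow>D h. \<pi> a * (\<Sum>(b,c)\<leftarrow>D u. \<pi> (S b) * \<pi> (c * ?w)))"
    by (simp add: PR5)
  also have "\<dots> = (\<Sum>(a,b,c)\<leftarrow>cop2R D h. ?F a b (c * ?w))"
    by (simp add: cop2R_sum sl_multr[symmetric] sl_multl[symmetric] mult.assoc)
  also have "\<dots> = (\<Sum>(a,b,c)\<leftarrow>cop2R D (h * ?w). ?F a b c)"
    by (rule L3w[where F="?F", OF wsA, symmetric]) (rule linI[OF vs wsA]; simp add: distrib_left distrib_right)+
  also have "\<dots> = \<pi> (h * ?w)" using PR6[of "h * ?w"] copLR[of "h * ?w"] by simp
  finally show ?thesis .
qed

lemma E1: "(\<Sum>(p,q)\<leftarrow>D 1. \<pi> (S p) * \<pi> q) = 1"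
proof -
  have "(\<Sum>(p,q)\<leftarrow>D 1. \<pi> (S p) * \<pi> q) = (\<Sum>(p,q)\<leftarrow>D 1. \<pi> (S (eps_s sc D eps p)) * \<pi> q)"
    by (rule T1[where K="\<lambda>a b. \<pi> (S a) * \<pi> b", OF wsA, symmetric]) (rule linI[OF vs wsA]; simp add: distrib_left distrib_right)+
  also have "\<dots> = (\<Sum>(p,q)\<leftarrow>D 1. \<pi> (eps_t sc D eps (eps_s sc D eps p) * q))"
    by (simp add: S_s P3)
  also have "\<dots> = (\<Sum>(p,q)\<leftarrow>D 1. \<pi> (S (eps_s sc D eps p) * q))"
    by (simp add: S_s)
  also have "\<dots> = (\<Sum>(p,q)\<leftarrow>D 1. \<pi> (S p * q))"
    by (rule T1[where K="\<lambda>a b. \<pi> (S a * b)", OF wsA]) (rule linI[OF vs wsA]; simp add: distrib_left distrib_right)+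
  also have "\<dots> = \<pi> (\<Sum>(p,q)\<leftarrow>D 1. S p * q)" by (rule lin_sl[OF pil, symmetric])
  also have "\<dots> = 1" by (simp add: ant_s eps_s1 pi1)
  finally show ?thesis .
qed

lemma E2: "(\<Sum>(p,q)\<leftarrow>D 1. \<pi> p * \<pi> (S q)) = 1"
proof -
  have "(\<Sum>(p,q)\<leftarrow>D 1. \<pi> p * \<pi> (S q)) = (\<Sum>(p,q)\<leftarrow>D 1. \<pi> p * \<pi> (S (eps_t sc D eps q)))"
    by (rule T2[where K="\<lambda>a b. \<pi> a * \<pi> (S b)", OF wsA, symmetric]) (rule linI[OF vs wsA]; simp add: distrib_left distrib_right)+
  also have "\<dots> = (\<Sum>(p,q)\<leftarrow>D 1. \<pi> (p * eps_s sc D eps (eps_t sc D eps q)))"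
    by (simp add: S_t P4)
  also have "\<dots> = (\<Sum>(p,q)\<leftarrow>D 1. \<pi> (p * S (eps_t sc D eps q)))"
    by (simp add: S_t)
  also have "\<dots> = (\<Sum>(p,q)\<leftarrow>D 1. \<pi> (p * S q))"
    by (rule T2[where K="\<lambda>a b. \<pi> (a * S b)", OF wsA]) (rule linI[OF vs wsA]; simp add: distrib_left distrib_right)+
  also have "\<dots> = \<pi> (\<Sum>(p,q)\<leftarrow>D 1. p * S q)" by (rule lin_sl[OF pil, symmetric])
  also have "\<dots> = 1" by (simp add: ant_t eps_t1 pi1)
  finally show ?thesis .
qed

lemma P1: "\<pi> (eps_s sc D eps g) * \<pi> h = \<pi> (eps_s sc D eps g * h)"
proof -
  let ?w = "eps_s sc D eps g"
  have t: "(\<Sum>(p,q)\<leftarrow>D 1. \<pi> (S p) * \<pi> (eps_t sc D eps q)) = (\<Sum>(p,q)\<leftarrow>D 1. \<pi> (S p) * \<pi> q)"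
    by (rule T2[where K="\<lambda>a b. \<pi> (S a) * \<pi> b", OF wsA]) (rule linI[OF vs wsA]; simp add: distrib_left distrib_right)+
  have "(\<Sum>(a,b)\<leftarrow>D ?w. \<pi> (S a) * \<pi> b) = (\<Sum>(p,q)\<leftarrow>D 1. \<pi> (S p) * \<pi> (q * ?w))"
    by (rule Wr[where K="\<lambda>a b. \<pi> (S a) * \<pi> b", OF wsA]) (rule linI[OF vs wsA]; simp add: distrib_left distrib_right)+
  also have "\<dots> = (\<Sum>(p,q)\<leftarrow>D 1. \<pi> (S p) * \<pi> (eps_t sc D eps q * ?w))"
    by (rule T2[where K="\<lambda>a b. \<pi> (S a) * \<pi> (b * ?w)", OF wsA, symmetric]) (rule linI[OF vs wsA]; simp add: distrib_left distrib_right)+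
  also have "\<dots> = (\<Sum>(p,q)\<leftarrow>D 1. \<pi> (S p) * \<pi> (eps_t sc D eps q)) * \<pi> ?w"
    by (simp add: P3[symmetric] sl_multr[symmetric] mult.assoc)
  also have "\<dots> = \<pi> ?w" using t E1 by simp
  finally have piw: "(\<Sum>(a,b)\<leftarrow>D ?w. \<pi> (S a) * \<pi> b) = \<pi> ?w" .
  have "\<pi> ?w * \<pi> h = (\<Sum>(a,b)\<leftarrow>D ?w. \<pi> (S a) * \<pi> (b * h))"
    by (subst piw[symmetric]) (rule PR5)
  also have "\<dots> = (\<Sum>(p,q)\<leftarrow>D 1. \<pi> (S p) * \<pi> (q * ?w * h))"
    by (rule Wr[where K="\<lambda>a b. \<pi> (S a) * \<pi> (b * h)", OF wsA]) (rule linI[OF vs wsA]; simp add: distrib_left distrib_right)+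
  also have "\<dots> = (\<Sum>(p,q)\<leftarrow>D 1. \<pi> (S p) * \<pi> (eps_t sc D eps q * ?w * h))"
    by (rule T2[where K="\<lambda>a b. \<pi> (S a) * \<pi> (b * ?w * h)", OF wsA, symmetric]) (rule linI[OF vs wsA]; simp add: distrib_left distrib_right)+
  also have "\<dots> = (\<Sum>(p,q)\<leftarrow>D 1. \<pi> (S p) * \<pi> (eps_t sc D eps q)) * \<pi> (?w * h)"
    by (simp add: P3[symmetric] sl_multr[symmetric] mult.assoc)
  also have "\<dots> = \<pi> (?w * h)" using t E1 by simp
  finally show ?thesis .
qed

lemma P2: "\<pi> h * \<pi> (eps_t sc D eps g) = \<pi> (h * eps_t sc D eps g)"
proof -
  let ?z = "eps_t sc D eps g"
  have t: "(\<Sum>(p,q)\<leftarrow>D 1. \<pi> (eps_s sc D eps p) * \<pi> (S q)) = (\<Sum>(p,q)\<leftarrow>D 1. \<pi> p * \<pi> (S q))"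
    by (rule T1[where K="\<lambda>a b. \<pi> a * \<pi> (S b)", OF wsA]) (rule linI[OF vs wsA]; simp add: distrib_left distrib_right)+
  have "(\<Sum>(a,b)\<leftarrow>D ?z. \<pi> a * \<pi> (S b)) = (\<Sum>(p,q)\<leftarrow>D 1. \<pi> (?z * p) * \<pi> (S q))"
    by (rule Zl[where K="\<lambda>a b. \<pi> a * \<pi> (S b)", OF wsA]) (rule linI[OF vs wsA]; simp add: distrib_left distrib_right)+
  also have "\<dots> = (\<Sum>(p,q)\<leftarrow>D 1. \<pi> (?z * eps_s sc D eps p) * \<pi> (S q))"
    by (rule T1[where K="\<lambda>a b. \<pi> (?z * a) * \<pi> (S b)", OF wsA, symmetric]) (rule linI[OF vs wsA]; simp add: distrib_left distrib_right)+
  also have "\<dots> = \<pi> ?z * (\<Sum>(p,q)\<leftarrow>D 1. \<pi> (eps_s sc D eps p) * \<pi> (S q))"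
    by (simp add: P4[symmetric] sl_multl[symmetric] mult.assoc)
  also have "\<dots> = \<pi> ?z" using t E2 by simp
  finally have piz: "(\<Sum>(a,b)\<leftarrow>D ?z. \<pi> a * \<pi> (S b)) = \<pi> ?z" .
  have "\<pi> h * \<pi> ?z = (\<Sum>(a,b)\<leftarrow>D ?z. \<pi> (h * a) * \<pi> (S b))"
    by (subst piz[symmetric]) (rule PR2)
  also have "\<dots> = (\<Sum>(p,q)\<leftarrow>D 1. \<pi> (h * (?z * p)) * \<pi> (S q))"
    by (rule Zl[where K="\<lambda>a b. \<pi> (h * a) * \<pi> (S b)", OF wsA]) (rule linI[OF vs wsA]; simp add: distrib_left distrib_right)+
  also have "\<dots> = (\<Sum>(p,q)\<leftarrow>D 1. \<pi> (h * (?z * eps_s sc D eps p)) * \<pi> (S q))"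
    by (rule T1[where K="\<lambda>a b. \<pi> (h * (?z * a)) * \<pi> (S b)", OF wsA, symmetric]) (rule linI[OF vs wsA]; simp add: distrib_left distrib_right)+
  also have "\<dots> = \<pi> (h * ?z) * (\<Sum>(p,q)\<leftarrow>D 1. \<pi> (eps_s sc D eps p) * \<pi> (S q))"
    by (simp add: mult.assoc[symmetric] P4[symmetric] sl_multl[symmetric])
  also have "\<dots> = \<pi> (h * ?z)" using t E2 by simp
  finally show ?thesis .
qed

end

theorem proposition3p4:
  fixes sc :: "'k::field \<Rightarrow> 'h::ring_1 \<Rightarrow> 'h"
    and D :: "'h \<Rightarrow> ('h \<times> 'h) list" and eps :: "'h \<Rightarrow> 'k" and S :: "'h \<Rightarrow> 'h"
    and scA :: "'k \<Rightarrow> 'a::ring_1 \<Rightarrow> 'a" and \<pi> :: "'h \<Rightarrow> 'a"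
  assumes "weak_hopf_algebra sc D eps S"
    and "k_algebra scA"
    and "partial_rep sc D S scA \<pi>"
    and "w \<in> range (eps_s sc D eps)"
    and "z \<in> range (eps_t sc D eps)"
  shows "\<forall>h. \<pi> w * \<pi> h = \<pi> (w * h)
           \<and> \<pi> h * \<pi> z = \<pi> (h * z)
           \<and> \<pi> z * \<pi> h = \<pi> (z * h)
           \<and> \<pi> h * \<pi> w = \<pi> (h * w)"
proof -
  interpret wpr sc D eps S scA \<pi>
    using assms(1-3) by (simp add: wpr_def wha_def wpr_axioms_def)
  obtain g where w: "w = eps_s sc D eps g" using assms(4) by auto
  obtain g' where z: "z = eps_t sc D eps g'" using assms(5) by auto
  show ?thesis by (simp add: w z P1 P2 P3 P4)
qed

end
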